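(* Assume the Continuum Hypothesis. Then there exists a maximal almost disjoint family $\mathcal A$ of infinite subsets of $\omega$, each member of which is not an IP-set, such that for every AP-set $B\subseteq\omega$ and every finite-to-one function $f:B\to\omega$ there exist an AP-set $C\subseteq B$ and $A\in\mathcal A$ with $f[C]\subseteq A$.
   Context: $\omega=\{0,1,2,\dots\}$. A set $A\subseteq\omega$ is an AP-set if it contains arithmetic progressions of every finite length. For $B\subseteq\omega$, $FS(B)$ denotes the set of all sums $\sum_{n\in F}n$ over nonempty finite subsets $F\subseteq B$. A set $A\subseteq\omega$ is an IP-set if there is an infinite $B\subseteq\omega$ with $FS(B)\subseteq A$. A family $\mathcal A$ of infinite subsets of $\omega$ is almost disjoint if any two distinct members have finite intersection, and maximal almost disjoint if moreover every infinite $D\subseteq\omega$ has infinite intersection with some member of $\mathcal A$. *)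

theory Defs
  imports Main "HOL-Library.Equipollence" "HOL-Library.Countable_Set"
begin

definition CH :: bool where
  "CH \<longleftrightarrow> (\<forall>X :: nat set set. countable X \<or> X \<approx> (UNIV :: nat set set))"

definition AP_set :: "nat set \<Rightarrow> bool" where
  "AP_set A \<longleftrightarrow> (\<forall>k. \<exists>a d. d > 0 \<and> (\<forall>i<k. a + i * d \<in> A))"

definition FS :: "nat set \<Rightarrow> nat set" where
  "FS B = {\<Sum>F | F. F \<subseteq> B \<and> finite F \<and> F \<noteq> {}}"

definition IP_set :: "nat set \<Rightarrow> bool" where
  "IP_set A \<longleftrightarrow> (\<exists>B. infinite B \<and> FS B \<subseteq> A)"

definition almost_disjoint :: "nat set set \<Rightarrow> bool" where
  "almost_disjoint \<A> \<longleftrightarrow> (\<forall>A\<in>\<A>. infinite A) \<and>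
     (\<forall>A\<in>\<A>. \<forall>A'\<in>\<A>. A \<noteq> A' \<longrightarrow> finite (A \<inter> A'))"

definition MAD :: "nat set set \<Rightarrow> bool" where
  "MAD \<A> \<longleftrightarrow> almost_disjoint \<A> \<and>
     (\<forall>D. infinite D \<longrightarrow> (\<exists>A\<in>\<A>. infinite (D \<inter> A)))"

definition finite_to_one_on :: "nat set \<Rightarrow> (nat \<Rightarrow> nat) \<Rightarrow> bool" where
  "finite_to_one_on B f \<longleftrightarrow> (\<forall>n. finite {x\<in>B. f x = n})"

end

theory Submission
  imports Defs
begin

context includes cardinal_syntax
begin

lemma CH_wo:
  assumes ch: CH and g: "inj (g :: 'a \<Rightarrow> nat set)"
  shows "\<exists>R :: ('a \<times> 'a) set. wf R \<and> (\<forall>x y. x \<noteq> y \<longrightarrow> (x,y)\<in>R \<or> (y,x)\<in>R) \<and> (\<forall>y. countable {x. (x,y)\<in>R})"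
proof -
  define r where "r = |UNIV :: 'a set|"
  have co: "Card_order r" unfolding r_def by (rule card_of_Card_order)
  have fr: "Field r = UNIV" unfolding r_def by (rule Field_card_of)
  have wo: "Well_order r" using co by (simp add: card_order_on_def)
  have wf: "wf (r - Id)" using wo by (simp add: well_order_on_def)
  have tot0: "total_on UNIV r" using wo fr unfolding well_order_on_def linear_order_on_def by simp
  have tot: "\<forall>x y. x \<noteq> y \<longrightarrow> (x,y)\<in>r - Id \<or> (y,x)\<in>r - Id"
    using tot0 unfolding total_on_def by simp
  have le: "|UNIV :: 'a set| \<le>o |UNIV :: nat set set|"
  proof -
    have "\<exists>f. inj_on f (UNIV :: 'a set) \<and> f ` UNIV \<subseteq> (UNIV :: nat set set)"
      using g by (intro exI[of _ g] conjI) simp_all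
    thus ?thesis by (simp only: card_of_ordLeq)
  qed
  have cnt: "countable {x. (x,y)\<in>r - Id}" for y
  proof -
    have us: "{x. (x,y)\<in>r - Id} = underS r y" unfolding underS_def by fast
    have yF: "y \<in> Field r" using fr by simp
    have less: "|underS r y| <o r" by (rule card_of_underS[OF co yF])
    have ij: "inj_on g (underS r y)" by (rule inj_on_subset[OF g]) simp
    have "\<not> (g ` underS r y \<approx> (UNIV :: nat set set))"
    proof
      assume "g ` underS r y \<approx> (UNIV :: nat set set)"
      hence i1: "|g ` underS r y| =o |UNIV :: nat set set|" by (simp only: eqpoll_iff_card_of_ordIso)
      have "bij_betw g (underS r y) (g ` underS r y)" using ij by (simp add: bij_betw_def)
      hence i2: "|underS r y| =o |g ` underS r y|" by (rule card_of_ordIsoI)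
      have "|underS r y| =o |UNIV :: nat set set|" by (rule ordIso_transitive[OF i2 i1])
      hence "|UNIV :: nat set set| =o |underS r y|" by (rule ordIso_symmetric)
      hence "|UNIV :: nat set set| <o r" using less by (rule ordIso_ordLess_trans)
      hence "|UNIV :: nat set set| <o |UNIV :: nat set set|" using le[folded r_def] by (rule ordLess_ordLeq_trans)
      thus False by (simp add: ordLess_irreflexive)
    qed
    moreover have "countable (g ` underS r y) \<or> g ` underS r y \<approx> (UNIV :: nat set set)"
      using ch unfolding CH_def by (rule allE)
    ultimately have "countable (g ` underS r y)" by simp
    hence "countable (underS r y)" by (rule countable_image_inj_on[OF _ ij])
    thus ?thesis using us by simp
  qed
  have "wf (r - Id) \<and> (\<forall>x y. x \<noteq> y \<longrightarrow> (x,y)\<in>r - Id \<or> (y,x)\<in>r - Id) \<and> (\<forall>y. countable {x. (x,y)\<in>r - Id})"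
    using wf tot cnt by simp
  thus ?thesis by (intro exI[of _ "r - Id"])
qed
end

definition mono_ap :: "(nat \<Rightarrow> nat) \<Rightarrow> nat \<Rightarrow> nat \<Rightarrow> bool" where
  "mono_ap c N k \<longleftrightarrow> (\<exists>a d. 0 < d \<and> d \<le> N \<and> a < N \<and> (\<forall>i<k. a + i*d < N \<and> c (a+i*d) = c a))"

definition vdw :: "nat \<Rightarrow> nat \<Rightarrow> nat \<Rightarrow> bool" where
  "vdw k r N \<longleftrightarrow> (\<forall>c. card (c ` {..<N}) \<le> r \<longrightarrow> mono_ap c N k)"

definition focused :: "(nat \<Rightarrow> nat) \<Rightarrow> nat \<Rightarrow> nat \<Rightarrow> nat \<Rightarrow> bool" where
  "focused c k f col \<longleftrightarrow> (\<exists>a d. 0 < d \<and> a + k*d = f \<and> (\<forall>i<k. c (a+i*d) = col))"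

lemma vdw_pos: "vdw k r N \<Longrightarrow> 0 < N"
  unfolding vdw_def mono_ap_def by (cases N) (auto elim!: allE[of _ id])

lemma focused_ext:
  assumes "focused c k f (c f)" "f < N" "1 \<le> k"
  shows "mono_ap c N (Suc k)"
proof -
  obtain a d where ad: "0 < d" "a + k*d = f" "\<forall>i<k. c (a+i*d) = c f"
    using assms(1) unfolding focused_def by blast
  have "d \<le> f" using ad assms(3) by (metis le_add2 le_trans mult_le_mono1 mult_1 )
  have c0: "c a = c f" using ad(3) assms(3) by (metis less_le_trans mult_0 add_0_right zero_less_one)
  have "a + i*d < N \<and> c (a+i*d) = c a" if "i < Suc k" for i
  proof (cases "i = k")
    case True thus ?thesis using ad c0 assms by auto
  next
    case False
    hence "i < k" using that by auto
    hence "a + i*d < a + k*d" using ad(1) by auto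
    thus ?thesis using ad c0 assms \<open>i<k\<close> by auto
  qed
  moreover have "a < N" using ad assms by auto
  ultimately show ?thesis unfolding mono_ap_def using ad(1) \<open>d \<le> f\<close> assms(2)
    by (intro exI[of _ a] exI[of _ d]) auto
qed

lemma focused_in_range:
  assumes "focused c k f col" "1 \<le> k" "f < N"
  shows "col \<in> c ` {..<N}"
proof -
  obtain a d where ad: "0 < d" "a + k*d = f" "\<forall>i<k. c (a+i*d) = col"
    using assms(1) unfolding focused_def by blast
  have "c a = col" using ad(3) assms(2) by (metis less_le_trans mult_0 add_0_right zero_less_one)
  moreover have "a < N" using ad assms by (metis add_less_same_cancel1 le_less_trans less_le_trans mult_pos_pos not_add_less1 zero_less_one nat_mult_less_cancel_disj less_add_same_cancel1 linorder_not_less)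
  ultimately show ?thesis by auto
qed

lemma card_blocks:
  assumes "card (c ` {..<N}) \<le> r" "W*Ns \<le> N"
  shows "card ((\<lambda>b. to_nat (map (\<lambda>t. c (b*Ns+t)) [0..<Ns])) ` {..<W}) \<le> r^Ns"
proof -
  let ?L = "{xs. set xs \<subseteq> c ` {..<N} \<and> length xs = Ns}"
  have sub: "(\<lambda>b. to_nat (map (\<lambda>t. c (b*Ns+t)) [0..<Ns])) ` {..<W} \<subseteq> to_nat ` ?L"
  proof
    fix y assume "y \<in> (\<lambda>b. to_nat (map (\<lambda>t. c (b*Ns+t)) [0..<Ns])) ` {..<W}"
    then obtain b where b: "b < W" "y = to_nat (map (\<lambda>t. c (b*Ns+t)) [0..<Ns])" by auto
    have "b*Ns + t < N" if "t < Ns" for t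
    proof -
      have "b*Ns + t < b*Ns + Ns" using that by simp
      also have "\<dots> = (b+1)*Ns" by simp
      also have "\<dots> \<le> W*Ns" using b(1) by (intro mult_le_mono1) simp
      finally show ?thesis using assms(2) by simp
    qed
    hence "map (\<lambda>t. c (b*Ns+t)) [0..<Ns] \<in> ?L" by auto
    thus "y \<in> to_nat ` ?L" using b by auto
  qed
  have fin: "finite ?L" by (intro finite_lists_length_eq) simp
  have "card ((\<lambda>b. to_nat (map (\<lambda>t. c (b*Ns+t)) [0..<Ns])) ` {..<W}) \<le> card (to_nat ` ?L)"
    using sub fin by (intro card_mono) auto
  also have "\<dots> \<le> card ?L" by (rule card_image_le[OF fin])
  also have "\<dots> = card (c ` {..<N}) ^ Ns" by (intro card_lists_length_eq) simp
  also have "\<dots> \<le> r ^ Ns" using assms(1) by (rule power_mono) simp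
  finally show ?thesis .
qed

lemma focus_step:
  assumes k1: "1 \<le> k" and IH: "\<forall>r'. \<exists>N. vdw k r' N"
  shows "\<exists>N>0. \<forall>c. card (c ` {..<N}) \<le> r \<longrightarrow> mono_ap c N (Suc k) \<or>
     (\<exists>f<N. \<exists>S. finite S \<and> card S = s \<and> c f \<notin> S \<and> (\<forall>col\<in>S. focused c k f col))"
proof (induction s)
  case 0
  have "\<exists>f<1. \<exists>S. finite S \<and> card S = 0 \<and> c f \<notin> S \<and> (\<forall>col\<in>S. focused c k f col)" for c :: "nat \<Rightarrow> nat"
    by (rule exI[of _ 0], simp, rule exI[of _ "{}"], simp)
  thus ?case by (intro exI[of _ 1]) blast
next
  case (Suc s)
  then obtain Ns where Ns: "0 < Ns" and HNs: "\<And>c. card (c ` {..<Ns}) \<le> r \<Longrightarrow> mono_ap c Ns (Suc k) \<or>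
     (\<exists>f<Ns. \<exists>S. finite S \<and> card S = s \<and> c f \<notin> S \<and> (\<forall>col\<in>S. focused c k f col))" by blast
  obtain W where W: "vdw k (r^Ns) W" using IH by blast
  have W0: "0 < W" using vdw_pos[OF W] .
  define N where "N = 2*W*Ns"
  have N0: "0 < N" using W0 Ns N_def by simp
  have "card (c ` {..<N}) \<le> r \<longrightarrow> mono_ap c N (Suc k) \<or>
     (\<exists>f<N. \<exists>S. finite S \<and> card S = Suc s \<and> c f \<notin> S \<and> (\<forall>col\<in>S. focused c k f col))" for c
  proof
    assume cr: "card (c ` {..<N}) \<le> r"
    define cb where "cb b = to_nat (map (\<lambda>t. c (b*Ns+t)) [0..<Ns])" for b
    have WN: "W*Ns \<le> N" unfolding N_def by simp
    have "card (cb ` {..<W}) \<le> r^Ns" unfolding cb_def using card_blocks[OF cr WN] .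
    hence "mono_ap cb W k" using W unfolding vdw_def by blast
    then obtain b D where bD: "0 < D" "D \<le> W" "b < W" "\<And>i. i<k \<Longrightarrow> b + i*D < W \<and> cb (b+i*D) = cb b"
      unfolding mono_ap_def by blast
    have blk: "c ((b+i*D)*Ns + t) = c (b*Ns+t)" if "i < k" "t < Ns" for i t
    proof -
      have "to_nat (map (\<lambda>t. c ((b+i*D)*Ns+t)) [0..<Ns]) = to_nat (map (\<lambda>t. c (b*Ns+t)) [0..<Ns])"
        using bD(4)[OF that(1)] unfolding cb_def by simp
      hence "map (\<lambda>t. c ((b+i*D)*Ns+t)) [0..<Ns] = map (\<lambda>t. c (b*Ns+t)) [0..<Ns]"
        by (rule injD[OF inj_to_nat])
      thus ?thesis using that(2) by simp
    qed
    define c' where "c' x = c (b*Ns + x)" for x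
    have inN: "b*Ns + x < N" if "x < Ns" for x
    proof -
      have "b*Ns + x < (b+1)*Ns" using that by simp
      also have "\<dots> \<le> W*Ns" using bD(3) by (intro mult_le_mono1) simp
      finally show ?thesis using WN by simp
    qed
    have "c' ` {..<Ns} \<subseteq> c ` {..<N}" unfolding c'_def using inN by auto
    hence "card (c' ` {..<Ns}) \<le> card (c ` {..<N})" by (intro card_mono) auto
    hence "card (c' ` {..<Ns}) \<le> r" using cr by simp
    from HNs[OF this] show "mono_ap c N (Suc k) \<or>
     (\<exists>f<N. \<exists>S. finite S \<and> card S = Suc s \<and> c f \<notin> S \<and> (\<forall>col\<in>S. focused c k f col))"
    proof
      assume "mono_ap c' Ns (Suc k)"
      then obtain a d where ad: "0 < d" "d \<le> Ns" "a < Ns" "\<And>i. i<Suc k \<Longrightarrow> a + i*d < Ns \<and> c' (a+i*d) = c' a"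
        unfolding mono_ap_def by blast
      have "Ns \<le> W*Ns" using W0 by simp
      hence "d \<le> N" using ad(2) WN by linarith
      have "\<forall>i<Suc k. (b*Ns+a) + i*d < N \<and> c ((b*Ns+a)+i*d) = c (b*Ns+a)"
      proof (intro allI impI)
        fix i assume "i < Suc k"
        from ad(4)[OF this] have "a + i*d < Ns" "c (b*Ns + (a+i*d)) = c (b*Ns + a)" unfolding c'_def by auto
        thus "(b*Ns+a) + i*d < N \<and> c ((b*Ns+a)+i*d) = c (b*Ns+a)" using inN by (simp add: add.assoc)
      qed
      hence "0 < d \<and> d \<le> N \<and> b*Ns + a < N \<and> (\<forall>i<Suc k. (b*Ns+a) + i*d < N \<and> c ((b*Ns+a)+i*d) = c (b*Ns+a))"
        using ad(1) \<open>d \<le> N\<close> inN[OF ad(3)] by blast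
      hence "mono_ap c N (Suc k)" unfolding mono_ap_def by blast
      thus ?thesis by blast
    next
      assume "\<exists>f<Ns. \<exists>S. finite S \<and> card S = s \<and> c' f \<notin> S \<and> (\<forall>col\<in>S. focused c' k f col)"
      then obtain f S where fS: "f < Ns" "finite S" "card S = s" "c' f \<notin> S" "\<And>col. col\<in>S \<Longrightarrow> focused c' k f col"
        by blast
      define F where "F = b*Ns + f + k*D*Ns"
      have bk: "b + k*D < 2*W"
      proof -
        have "b + (k-1)*D < W" using bD(4)[of "k-1"] k1 by simp
        moreover have "b + k*D = b + (k-1)*D + D" using k1 by (cases k) auto
        ultimately show ?thesis using bD(2) by simp
      qed
      have FN: "F < N"
      proof -
        have "F = (b + k*D)*Ns + f" unfolding F_def by (simp add: algebra_simps)
        also have "\<dots> < (b + k*D)*Ns + Ns" using fS(1) by simp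
        also have "\<dots> = (b + k*D + 1)*Ns" by simp
        also have "\<dots> \<le> (2*W)*Ns" using bk by (intro mult_le_mono1) simp
        finally show ?thesis unfolding N_def by simp
      qed
      define S' where "S' = insert (c' f) S"
      have S'fin: "finite S'" "card S' = Suc s" using fS unfolding S'_def by auto
      have foc: "focused c k F col" if "col \<in> S'" for col
      proof (cases "col = c' f")
        case True
        have "\<forall>i<k. c ((b*Ns+f) + i*(D*Ns)) = col"
        proof (intro allI impI)
          fix i assume "i < k"
          have e: "(b*Ns+f) + i*(D*Ns) = (b+i*D)*Ns + f" by (simp add: algebra_simps)
          show "c ((b*Ns+f) + i*(D*Ns)) = col" unfolding e using blk[OF \<open>i<k\<close> fS(1)] True unfolding c'_def by simp
        qed
        moreover have "(b*Ns+f) + k*(D*Ns) = F" unfolding F_def by (simp add: algebra_simps)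
        moreover have "0 < D*Ns" using bD(1) Ns by simp
        ultimately show ?thesis unfolding focused_def by blast
      next
        case False
        hence "col \<in> S" using that S'_def by auto
        then obtain a d where ad: "0 < d" "a + k*d = f" "\<forall>i<k. c' (a+i*d) = col"
          using fS(5) unfolding focused_def by blast
        have "\<forall>i<k. c ((b*Ns+a) + i*(d + D*Ns)) = col"
        proof (intro allI impI)
          fix i assume "i < k"
          have "a + i*d < a + k*d" using \<open>i<k\<close> ad(1) by simp
          hence lt: "a + i*d < Ns" using ad(2) fS(1) by simp
          have e: "(b*Ns+a) + i*(d + D*Ns) = (b+i*D)*Ns + (a + i*d)" by (simp add: algebra_simps)
          show "c ((b*Ns+a) + i*(d + D*Ns)) = col" unfolding e using blk[OF \<open>i<k\<close> lt] ad(3) \<open>i<k\<close> unfolding c'_def by simp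
        qed
        moreover have "(b*Ns+a) + k*(d + D*Ns) = F" unfolding F_def using ad(2) by (simp add: algebra_simps)
        moreover have "0 < d + D*Ns" using ad(1) by simp
        ultimately show ?thesis unfolding focused_def by blast
      qed
      show ?thesis
      proof (cases "c F \<in> S'")
        case True
        hence "focused c k F (c F)" using foc by blast
        hence "mono_ap c N (Suc k)" using focused_ext FN k1 by blast
        thus ?thesis by blast
      next
        case False
        have "\<exists>S. finite S \<and> card S = Suc s \<and> c F \<notin> S \<and> (\<forall>col\<in>S. focused c k F col)"
          using False S'fin foc by blast
        thus ?thesis using FN by blast
      qed
    qed
  qed
  thus ?case using N0 by blast
qed

lemma vdw_all: "1 \<le> k \<Longrightarrow> \<exists>N. vdw k r N"
proof (induction k arbitrary: r rule: nat_induct_at_least)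
  case base
  have "mono_ap c 1 1" for c unfolding mono_ap_def by (rule exI[of _ 0], rule exI[of _ 1]) simp
  thus ?case unfolding vdw_def by blast
next
  case (Suc k)
  obtain N where N: "0 < N" and HN: "\<And>c. card (c ` {..<N}) \<le> r \<Longrightarrow> mono_ap c N (Suc k) \<or>
     (\<exists>f<N. \<exists>S. finite S \<and> card S = r \<and> c f \<notin> S \<and> (\<forall>col\<in>S. focused c k f col))"
    using focus_step[OF Suc.hyps(1), of r r] Suc.IH by blast
  have "mono_ap c N (Suc k)" if cr: "card (c ` {..<N}) \<le> r" for c
  proof (rule ccontr)
    assume nm: "\<not> mono_ap c N (Suc k)"
    then obtain f S where fS: "f < N" "finite S" "card S = r" "c f \<notin> S" "\<And>col. col\<in>S \<Longrightarrow> focused c k f col"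
      using HN[OF cr] by blast
    have "insert (c f) S \<subseteq> c ` {..<N}" using fS focused_in_range[OF _ Suc.hyps(1) fS(1)] by auto
    hence "card (insert (c f) S) \<le> card (c ` {..<N})" by (intro card_mono) auto
    thus False using fS cr by simp
  qed
  thus ?case unfolding vdw_def by blast
qed

lemma AP_union: assumes "AP_set (X \<union> Y)" shows "AP_set X \<or> AP_set Y"
proof (rule ccontr)
  assume not: "\<not> (AP_set X \<or> AP_set Y)"
  have "\<not> AP_set X" "\<not> AP_set Y" using not by auto
  then obtain k1 k2 where k1: "\<And>a d. d > 0 \<Longrightarrow> \<not> (\<forall>i<k1. a+i*d \<in> X)"
     and k2: "\<And>a d. d > 0 \<Longrightarrow> \<not> (\<forall>i<k2. a+i*d \<in> Y)" unfolding AP_set_def not_all not_ex by meson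
  define k where "k = max (max k1 k2) 1"
  have "1 \<le> k" unfolding k_def by simp
  then obtain N where N: "vdw k 2 N" using vdw_all[of k 2] by blast
  obtain a0 d0 where ad0: "0 < d0" "\<And>i. i<N \<Longrightarrow> a0 + i*d0 \<in> X \<union> Y" using assms unfolding AP_set_def by blast
  define c where "c j = (if a0 + j*d0 \<in> X then 0 else 1::nat)" for j
  have "c ` {..<N} \<subseteq> {0,1}" unfolding c_def by auto
  hence "card (c ` {..<N}) \<le> card {0::nat,1}" by (intro card_mono) auto
  hence "card (c ` {..<N}) \<le> 2" by simp
  hence "mono_ap c N k" using N unfolding vdw_def by blast
  then obtain a d where ad: "0 < d" "\<And>i. i<k \<Longrightarrow> a + i*d < N \<and> c (a+i*d) = c a" unfolding mono_ap_def by blast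
  have e: "(a0 + a*d0) + i*(d*d0) = a0 + (a+i*d)*d0" for i by (simp add: algebra_simps)
  have dd: "0 < d*d0" using ad(1) ad0(1) by simp
  show False
  proof (cases "c a = 0")
    case True
    have "\<forall>i<k1. (a0 + a*d0) + i*(d*d0) \<in> X"
    proof (intro allI impI)
      fix i assume "i < k1" hence "i < k" unfolding k_def by simp
      hence "c (a+i*d) = 0" using ad(2)[of i] True by simp
      thus "(a0 + a*d0) + i*(d*d0) \<in> X" unfolding e c_def by (simp split: if_splits)
    qed
    thus False using k1[OF dd] by blast
  next
    case False
    have "\<forall>i<k2. (a0 + a*d0) + i*(d*d0) \<in> Y"
    proof (intro allI impI)
      fix i assume "i < k2" hence "i < k" unfolding k_def by simp
      hence "a + i*d < N" "c (a+i*d) \<noteq> 0" using ad(2)[of i] False by auto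
      hence "a0 + (a+i*d)*d0 \<in> X \<union> Y" "a0 + (a+i*d)*d0 \<notin> X" using ad0(2)[of "a+i*d"] unfolding c_def by (auto split: if_splits)
      thus "(a0 + a*d0) + i*(d*d0) \<in> Y" unfolding e by blast
    qed
    thus False using k2[OF dd] by blast
  qed
qed

lemma AP_nonempty: assumes "AP_set X" shows "X \<noteq> {}"
proof -
  obtain a d where "0 < d" "\<forall>i<1. a + i*d \<in> X" using assms unfolding AP_set_def by blast
  thus ?thesis by auto
qed

lemma AP_Union: assumes "finite I" "AP_set (\<Union>i\<in>I. X i)" shows "\<exists>i\<in>I. AP_set (X i)"
  using assms
proof (induction I rule: finite_induct)
  case empty thus ?case using AP_nonempty by auto
next
  case (insert j I)
  hence "AP_set (X j \<union> (\<Union>i\<in>I. X i))" by simp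
  thus ?case using AP_union insert.IH by blast
qed

lemma AP_minus_finite: assumes "AP_set A" "finite F" shows "AP_set (A - F)"
  unfolding AP_set_def
proof
  fix k
  obtain M where M0: "\<forall>x\<in>F. x \<le> M" using assms(2) finite_nat_set_iff_bounded_le by auto
  hence M: "\<And>x. x \<in> F \<Longrightarrow> x \<le> M" by blast
  obtain a d where ad: "0 < d" "\<And>i. i < k + M + 1 \<Longrightarrow> a + i*d \<in> A" using assms(1) unfolding AP_set_def by blast
  have "\<forall>i<k. (a + (M+1)*d) + i*d \<in> A - F"
  proof (intro allI impI)
    fix i assume "i < k"
    have e: "(a + (M+1)*d) + i*d = a + (M+1+i)*d" by (simp add: algebra_simps)
    have "(M + 1 + i)*1 \<le> (M+1+i)*d" using ad(1) by (intro mult_le_mono2) simp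
    hence "M < a + (M+1+i)*d" by simp
    hence "a + (M+1+i)*d \<notin> F" using M by fastforce
    moreover have "a + (M+1+i)*d \<in> A" using ad(2)[of "M+1+i"] \<open>i<k\<close> by simp
    ultimately show "(a + (M+1)*d) + i*d \<in> A - F" unfolding e by blast
  qed
  thus "\<exists>a d. 0 < d \<and> (\<forall>i<k. a + i*d \<in> A - F)" using ad(1) by blast
qed

definition thin :: "nat set \<Rightarrow> bool" where
  "thin A \<longleftrightarrow> (\<forall>x>0. finite {y\<in>A. x + y \<in> A})"

lemma thin_not_IP: assumes "thin A" shows "\<not> IP_set A"
proof
  assume "IP_set A"
  then obtain B where B: "infinite B" "FS B \<subseteq> A" unfolding IP_set_def by blast
  have BA: "b \<in> A" if "b \<in> B" for b
  proof -
    have "\<Sum>{b} \<in> FS B" unfolding FS_def using that by blast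
    thus ?thesis using B(2) by auto
  qed
  have "infinite (B - {0})" using B(1) by simp
  then obtain x where x: "x \<in> B" "x \<noteq> 0" by (metis Diff_iff finite.emptyI insertI1 ex_in_conv)
  have "B - {x} \<subseteq> {y\<in>A. x + y \<in> A}"
  proof
    fix y assume y: "y \<in> B - {x}"
    have "\<Sum>{x,y} \<in> FS B" unfolding FS_def using y x by blast
    hence "x + y \<in> A" using B(2) y by auto
    thus "y \<in> {y\<in>A. x + y \<in> A}" using BA y by auto
  qed
  moreover have "finite {y\<in>A. x + y \<in> A}" using assms x unfolding thin_def by simp
  ultimately have "finite (B - {x})" by (rule finite_subset)
  thus False using B(1) by simp
qed

lemma diag:
  fixes g :: "'q \<Rightarrow> nat set" and P :: "nat \<Rightarrow> 'q \<Rightarrow> bool" and a :: "nat \<Rightarrow> nat set"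
  assumes ex: "\<And>k M. \<exists>Q. P k Q \<and> g Q \<noteq> {} \<and> finite (g Q) \<and> (\<forall>x\<in>g Q. M < x \<and> (\<forall>i\<le>k. x \<notin> a i))
      \<and> (\<forall>x\<in>g Q. \<forall>y\<in>g Q. x < y \<longrightarrow> k < y - x)"
  shows "\<exists>q. (\<forall>k. P k (q k)) \<and> infinite (\<Union>k. g (q k)) \<and> thin (\<Union>k. g (q k)) \<and> (\<forall>i. finite ((\<Union>k. g (q k)) \<inter> a i))"
proof -
  define cond where "cond k M Q \<longleftrightarrow> P k Q \<and> g Q \<noteq> {} \<and> finite (g Q) \<and> (\<forall>x\<in>g Q. M < x \<and> (\<forall>i\<le>k. x \<notin> a i))
      \<and> (\<forall>x\<in>g Q. \<forall>y\<in>g Q. x < y \<longrightarrow> k < y - x)" for k M Q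
  have exc: "\<exists>Q. cond k M Q" for k M using ex unfolding cond_def by blast
  define q where "q = rec_nat (SOME Q. cond 0 0 Q) (\<lambda>k Q'. SOME Q. cond (Suc k) (Max (g Q') + Suc k) Q)"
  have q0: "q 0 = (SOME Q. cond 0 0 Q)" unfolding q_def by simp
  have qS: "q (Suc k) = (SOME Q. cond (Suc k) (Max (g (q k)) + Suc k) Q)" for k unfolding q_def by simp
  define bnd where "bnd k = (case k of 0 \<Rightarrow> 0 | Suc m \<Rightarrow> Max (g (q m)) + Suc m)" for k
  have cq: "cond k (bnd k) (q k)" for k
  proof (cases k)
    case 0 thus ?thesis using q0 someI_ex[OF exc, of 0 0] by (simp add: bnd_def)
  next
    case (Suc m) thus ?thesis using qS[of m] someI_ex[OF exc, of "Suc m" "Max (g (q m)) + Suc m"] by (simp add: bnd_def)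
  qed
  define I where "I k = g (q k)" for k
  have P: "P k (q k)" for k using cq unfolding cond_def by blast
  have Ine: "I k \<noteq> {}" and Ifin: "finite (I k)" for k using cq unfolding cond_def I_def by auto
  have Ia: "x \<in> I k \<Longrightarrow> i \<le> k \<Longrightarrow> x \<notin> a i" for x k i using cq unfolding cond_def I_def by blast
  have Idiff: "x \<in> I k \<Longrightarrow> y \<in> I k \<Longrightarrow> x < y \<Longrightarrow> k < y - x" for x y k using cq unfolding cond_def I_def by blast
  have Ibnd: "x \<in> I (Suc m) \<Longrightarrow> Max (I m) + Suc m < x" for x m
    using cq[of "Suc m"] unfolding cond_def I_def bnd_def by auto
  have Imax: "y \<in> I j \<Longrightarrow> j \<le> m \<Longrightarrow> y \<le> Max (I m)" for y j m
  proof (induction m)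
    case 0 thus ?case using Ifin by simp
  next
    case (Suc m)
    show ?case
    proof (cases "j = Suc m")
      case True thus ?thesis using Suc.prems Ifin by simp
    next
      case False
      hence "y \<le> Max (I m)" using Suc by simp
      moreover obtain z where "z \<in> I (Suc m)" using Ine by blast
      moreover have "z \<le> Max (I (Suc m))" using Ifin \<open>z \<in> I (Suc m)\<close> by simp
      ultimately show ?thesis using Ibnd[of z m] by simp
    qed
  qed
  have Ilt: "y \<in> I j \<Longrightarrow> z \<in> I k \<Longrightarrow> j < k \<Longrightarrow> y + k < z" for y z j k
  proof -
    assume h: "y \<in> I j" "z \<in> I k" "j < k"
    then obtain m where m: "k = Suc m" "j \<le> m" by (cases k) auto
    have "y \<le> Max (I m)" using Imax h m by simp
    moreover have "Max (I m) + Suc m < z" using Ibnd h m by simp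
    ultimately show "y + k < z" using m by simp
  qed
  define A where "A = (\<Union>k. I k)"
  have thin: "thin A" unfolding thin_def
  proof (intro allI impI)
    fix x :: nat assume "0 < x"
    have "{y\<in>A. x + y \<in> A} \<subseteq> (\<Union>j<x. I j)"
    proof
      fix y assume "y \<in> {y\<in>A. x + y \<in> A}"
      then obtain j k where jk: "y \<in> I j" "x + y \<in> I k" unfolding A_def by blast
      have "k < x"
      proof (cases j k rule: linorder_cases)
        case less thus ?thesis using Ilt[OF jk less] by simp
      next
        case equal thus ?thesis using Idiff[of y k "x+y"] jk \<open>0<x\<close> by simp
      next
        case greater thus ?thesis using Ilt[OF jk(2) jk(1) greater] by simp
      qed
      moreover have "j \<le> k"
      proof (rule ccontr)
        assume "\<not> j \<le> k" hence "k < j" by simp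
        thus False using Ilt[OF jk(2) jk(1)] by simp
      qed
      ultimately show "y \<in> (\<Union>j<x. I j)" using jk by auto
    qed
    moreover have "finite (\<Union>j<x. I j)" using Ifin by simp
    ultimately show "finite {y\<in>A. x + y \<in> A}" by (rule finite_subset)
  qed
  have inf: "infinite A"
    unfolding infinite_nat_iff_unbounded
  proof
    fix m
    obtain z where z: "z \<in> I (Suc m)" using Ine by blast
    hence "m < z" using Ibnd[OF z] by simp
    thus "\<exists>z. m < z \<and> z \<in> A" using z unfolding A_def by blast
  qed
  have ad: "finite (A \<inter> a i)" for i
  proof -
    have "A \<inter> a i \<subseteq> (\<Union>k<i. I k)"
    proof
      fix y assume "y \<in> A \<inter> a i"
      then obtain k where "y \<in> I k" "y \<in> a i" unfolding A_def by blast
      hence "k < i" using Ia[of y k i] by (cases "i \<le> k") auto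
      thus "y \<in> (\<Union>k<i. I k)" using \<open>y \<in> I k\<close> by blast
    qed
    thus ?thesis by (rule finite_subset) (use Ifin in simp)
  qed
  show ?thesis using P inf thin ad unfolding A_def I_def by blast
qed

definition good :: "nat set set \<Rightarrow> nat set \<Rightarrow> bool" where
  "good \<A> A \<longleftrightarrow> A \<in> \<A> \<or> (infinite A \<and> thin A \<and> (\<forall>A'\<in>\<A>. finite (A' \<inter> A)))"

lemma enum_fam:
  assumes "countable \<A>"
  shows "range (from_nat_into (insert {} \<A>)) = insert {} \<A>"
proof -
  have "countable (insert {} \<A>)" using assms by simp
  thus ?thesis by (intro range_from_nat_into) auto
qed

lemma step_mad:
  assumes cA: "countable \<A>" and D: "infinite D"
  shows "\<exists>A. good \<A> A \<and> infinite (D \<inter> A)"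
proof (cases "\<exists>A'\<in>\<A>. infinite (D \<inter> A')")
  case True thus ?thesis unfolding good_def by blast
next
  case False
  define a where "a = from_nat_into (insert {} \<A>)"
  have a: "range a = insert {} \<A>" unfolding a_def by (rule enum_fam[OF cA])
  have Dai: "finite (D \<inter> a i)" for i
  proof -
    have "a i \<in> range a" by simp
    hence "a i \<in> insert {} \<A>" using a by simp
    thus ?thesis using False by auto
  qed
  have "\<exists>Q. Q \<subseteq> D \<and> id Q \<noteq> {} \<and> finite (id Q) \<and> (\<forall>x\<in>id Q. M < x \<and> (\<forall>i\<le>k. x \<notin> a i))
      \<and> (\<forall>x\<in>id Q. \<forall>y\<in>id Q. x < y \<longrightarrow> k < y - x)" for k M
  proof -
    have "D \<inter> (\<Union>i\<le>k. a i) \<subseteq> (\<Union>i\<le>k. D \<inter> a i)" by blast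
    moreover have "finite (\<Union>i\<le>k. D \<inter> a i)" by (rule finite_UN_I) (simp_all add: Dai)
    ultimately have "finite (D \<inter> (\<Union>i\<le>k. a i))" by (rule finite_subset)
    hence "finite (D \<inter> (\<Union>i\<le>k. a i) \<union> {..M})" by simp
    hence "infinite (D - (D \<inter> (\<Union>i\<le>k. a i) \<union> {..M}))" using D by (rule Diff_infinite_finite)
    hence "D - (D \<inter> (\<Union>i\<le>k. a i) \<union> {..M}) \<noteq> {}" by (rule infinite_imp_nonempty)
    then obtain x where "x \<in> D - (D \<inter> (\<Union>i\<le>k. a i) \<union> {..M})" by blast
    hence "x \<in> D" "M < x" "\<forall>i\<le>k. x \<notin> a i" by auto
    thus ?thesis by (intro exI[of _ "{x}"]) simp
  qed
  note exQ = this
  have "\<exists>q. (\<forall>k::nat. q k \<subseteq> D) \<and> infinite (\<Union>k. id (q k)) \<and> thin (\<Union>k. id (q k)) \<and>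
     (\<forall>i. finite ((\<Union>k. id (q k)) \<inter> a i))"
    using diag[of "\<lambda>k Q. Q \<subseteq> D" id a, OF exQ] by (simp only: id_apply)
  then obtain q where q: "\<forall>k::nat. q k \<subseteq> D" "infinite (\<Union>k. id (q k))" "thin (\<Union>k. id (q k))"
     "\<forall>i. finite ((\<Union>k. id (q k)) \<inter> a i)" by (elim exE conjE) simp
  define A where "A = (\<Union>k. q k)"
  have "A \<subseteq> D" using q(1) unfolding A_def by blast
  hence "D \<inter> A = A" by blast
  moreover have "\<forall>A'\<in>\<A>. finite (A' \<inter> A)"
  proof
    fix A' assume "A' \<in> \<A>"
    hence "A' \<in> range a" using a by simp
    then obtain i where "A' = a i" by blast
    have "finite (A \<inter> A')" using q(4) \<open>A' = a i\<close> unfolding A_def by simp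
    thus "finite (A' \<inter> A)" by (simp add: Int_commute)
  qed
  moreover have "infinite A" "thin A" using q(2,3) unfolding A_def by simp_all
  ultimately have "good \<A> A \<and> infinite (D \<inter> A)" unfolding good_def by simp
  thus ?thesis by blast
qed

lemma mod_diff_ge:
  fixes x y m :: nat
  assumes "x mod m = y mod m" "x < y" "0 < m"
  shows "m \<le> y - x"
proof -
  have "m dvd y - x" using assms(1,2) mod_eq_dvd_iff_nat[of x y m] by simp
  moreover have "0 < y - x" using assms(2) by simp
  ultimately show ?thesis by (rule dvd_imp_le)
qed

lemma AP_mono: assumes "AP_set X" "X \<subseteq> Y" shows "AP_set Y"
  unfolding AP_set_def
proof
  fix k
  obtain a0 d where "0 < d" "\<forall>i<k. a0 + i*d \<in> X" using assms(1) unfolding AP_set_def by blast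
  thus "\<exists>a0 d. 0 < d \<and> (\<forall>i<k. a0 + i*d \<in> Y)" using assms(2) by blast
qed

lemma fto_finite: assumes "finite_to_one_on B f" shows "finite (B \<inter> f -` {..M})"
proof -
  have "B \<inter> f -` {..M} \<subseteq> (\<Union>m\<le>M. {x\<in>B. f x = m})" by auto
  moreover have "finite (\<Union>m\<le>M. {x\<in>B. f x = m})"
    using assms unfolding finite_to_one_on_def by (intro finite_UN_I) simp_all
  ultimately show ?thesis by (rule finite_subset)
qed

lemma step_ap:
  assumes cA: "countable \<A>" and B: "AP_set B" and f: "finite_to_one_on B f"
  shows "\<exists>A. good \<A> A \<and> (\<exists>C\<subseteq>B. AP_set C \<and> f ` C \<subseteq> A)"
proof (cases "\<exists>\<A>'. finite \<A>' \<and> \<A>' \<subseteq> insert {} \<A> \<and> \<not> AP_set (B - f -` \<Union>\<A>')")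
  case True
  then obtain \<A>' where h: "finite \<A>'" "\<A>' \<subseteq> insert {} \<A>" "\<not> AP_set (B - f -` \<Union>\<A>')" by blast
  have "B \<subseteq> (B - f -` \<Union>\<A>') \<union> (\<Union>A'\<in>\<A>'. B \<inter> f -` A')" by blast
  hence "AP_set ((B - f -` \<Union>\<A>') \<union> (\<Union>A'\<in>\<A>'. B \<inter> f -` A'))" by (rule AP_mono[OF B])
  hence "AP_set (\<Union>A'\<in>\<A>'. B \<inter> f -` A')" using AP_union h(3) by blast
  hence "\<exists>A'\<in>\<A>'. AP_set (B \<inter> f -` A')" by (rule AP_Union[OF h(1)])
  then obtain A' where A': "A' \<in> \<A>'" "AP_set (B \<inter> f -` A')" by blast
  have "A' \<noteq> {}" using A'(2) AP_nonempty by auto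
  hence "A' \<in> \<A>" using A'(1) h(2) by auto
  hence "good \<A> A'" unfolding good_def by simp
  moreover have "B \<inter> f -` A' \<subseteq> B" "f ` (B \<inter> f -` A') \<subseteq> A'" by auto
  ultimately show ?thesis using A'(2) by blast
next
  case False
  hence hyp: "\<And>\<A>'. finite \<A>' \<Longrightarrow> \<A>' \<subseteq> insert {} \<A> \<Longrightarrow> AP_set (B - f -` \<Union>\<A>')" by blast
  define a where "a = from_nat_into (insert {} \<A>)"
  have a: "range a = insert {} \<A>" unfolding a_def by (rule enum_fam[OF cA])
  have exQ: "\<exists>Q. (Q \<subseteq> B \<and> (\<exists>a0 d. 0<d \<and> (\<forall>i<k. a0 + i*d \<in> Q))) \<and> f ` Q \<noteq> {} \<and> finite (f ` Q)
     \<and> (\<forall>x\<in>f ` Q. M < x \<and> (\<forall>i\<le>k. x \<notin> a i)) \<and> (\<forall>x\<in>f ` Q. \<forall>y\<in>f ` Q. x < y \<longrightarrow> k < y - x)" for k M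
  proof -
    have "a ` {..k} \<subseteq> range a" by auto
    hence "a ` {..k} \<subseteq> insert {} \<A>" using a by simp
    hence B1: "AP_set (B - f -` \<Union>(a ` {..k}))" using hyp[of "a ` {..k}"] by simp
    define B2 where "B2 = (B - f -` \<Union>(a ` {..k})) - (B \<inter> f -` {..M})"
    have "AP_set B2" unfolding B2_def using AP_minus_finite[OF B1 fto_finite[OF f]] .
    moreover have "B2 \<subseteq> (\<Union>j<Suc k. {x\<in>B2. f x mod Suc k = j})" by auto
    ultimately have "AP_set (\<Union>j<Suc k. {x\<in>B2. f x mod Suc k = j})" by (rule AP_mono)
    hence "\<exists>j\<in>{..<Suc k}. AP_set {x\<in>B2. f x mod Suc k = j}" by (rule AP_Union[rotated]) simp
    then obtain j where j: "AP_set {x\<in>B2. f x mod Suc k = j}" by blast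
    then obtain a0 d where ad: "0 < d" "\<forall>i<Suc k. a0 + i*d \<in> {x\<in>B2. f x mod Suc k = j}"
      unfolding AP_set_def by blast
    define Q where "Q = (\<lambda>i. a0 + i*d) ` {..<Suc k}"
    have QB2: "Q \<subseteq> {x\<in>B2. f x mod Suc k = j}" unfolding Q_def using ad(2) by auto
    have "Q \<subseteq> B" using QB2 unfolding B2_def by auto
    moreover have "\<forall>i<k. a0 + i*d \<in> Q" unfolding Q_def by auto
    hence "\<exists>a0 d. 0<d \<and> (\<forall>i<k. a0 + i*d \<in> Q)" using ad(1) by blast
    moreover have "f ` Q \<noteq> {}" unfolding Q_def by auto
    moreover have "finite (f ` Q)" unfolding Q_def by simp
    moreover have "\<forall>x\<in>f ` Q. M < x \<and> (\<forall>i\<le>k. x \<notin> a i)"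
    proof
      fix x assume "x \<in> f ` Q"
      then obtain z where z: "z \<in> Q" "x = f z" by blast
      hence "z \<in> B2" using QB2 by auto
      thus "M < x \<and> (\<forall>i\<le>k. x \<notin> a i)" unfolding B2_def using z(2) by auto
    qed
    moreover have "\<forall>x\<in>f ` Q. \<forall>y\<in>f ` Q. x < y \<longrightarrow> k < y - x"
    proof (intro ballI impI)
      fix x y assume xy: "x \<in> f ` Q" "y \<in> f ` Q" "x < y"
      have "x mod Suc k = j" "y mod Suc k = j" using xy(1,2) QB2 by auto
      hence "Suc k \<le> y - x" using mod_diff_ge[of x "Suc k" y] xy(3) by simp
      thus "k < y - x" by simp
    qed
    ultimately show ?thesis by (intro exI[of _ Q] conjI) assumption+
  qed
  have "\<exists>q. (\<forall>k::nat. q k \<subseteq> B \<and> (\<exists>a0 d. 0<d \<and> (\<forall>i<k. a0 + i*d \<in> q k))) \<and> infinite (\<Union>k. f ` (q k))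
     \<and> thin (\<Union>k. f ` (q k)) \<and> (\<forall>i. finite ((\<Union>k. f ` (q k)) \<inter> a i))"
    using diag[of "\<lambda>k Q. Q \<subseteq> B \<and> (\<exists>a0 d. 0<d \<and> (\<forall>i<k. a0 + i*d \<in> Q))" "image f" a, OF exQ] by simp
  then obtain q where q: "\<forall>k::nat. q k \<subseteq> B \<and> (\<exists>a0 d. 0<d \<and> (\<forall>i<k. a0 + i*d \<in> q k))"
    "infinite (\<Union>k. f ` (q k))" "thin (\<Union>k. f ` (q k))" "\<forall>i. finite ((\<Union>k. f ` (q k)) \<inter> a i)"
    by (elim exE conjE) simp
  define A where "A = (\<Union>k. f ` (q k))"
  define C where "C = (\<Union>k. q k)"
  have CB: "C \<subseteq> B" using q(1) unfolding C_def by blast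
  have APC: "AP_set C" unfolding AP_set_def
  proof
    fix k
    obtain a0 d where "0<d" "\<forall>i<k. a0 + i*d \<in> q k" using q(1) by blast
    thus "\<exists>a0 d. 0 < d \<and> (\<forall>i<k. a0 + i*d \<in> C)" unfolding C_def by blast
  qed
  have fC: "f ` C \<subseteq> A" unfolding A_def C_def by blast
  have "\<forall>A'\<in>\<A>. finite (A' \<inter> A)"
  proof
    fix A' assume "A' \<in> \<A>"
    hence "A' \<in> range a" using a by simp
    then obtain i where "A' = a i" by blast
    have "finite (A \<inter> A')" using q(4) \<open>A' = a i\<close> unfolding A_def by simp
    thus "finite (A' \<inter> A)" by (simp add: Int_commute)
  qed
  moreover have "infinite A" "thin A" using q(2,3) unfolding A_def by simp_all
  ultimately have "good \<A> A" unfolding good_def by simp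
  thus ?thesis using CB APC fC by blast
qed

definition task_ok :: "bool \<times> nat set \<times> (nat \<Rightarrow> nat) \<Rightarrow> nat set \<Rightarrow> bool" where
  "task_ok t A \<longleftrightarrow> (case t of (b, B, f) \<Rightarrow>
     (b \<longrightarrow> infinite B \<longrightarrow> infinite (B \<inter> A)) \<and>
     (\<not> b \<longrightarrow> AP_set B \<and> finite_to_one_on B f \<longrightarrow> (\<exists>C\<subseteq>B. AP_set C \<and> f ` C \<subseteq> A)))"

lemma step_any:
  assumes "countable \<A>"
  shows "\<exists>A. good \<A> A \<and> task_ok t A"
proof -
  obtain b B f where t: "t = (b, B, f)" by (cases t) auto
  show ?thesis
  proof (cases "b \<and> infinite B")
    case True
    then obtain A where "good \<A> A" "infinite (B \<inter> A)" using step_mad[OF assms, of B] by blast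
    thus ?thesis using True unfolding task_ok_def t by auto
  next
    case c1: False
    show ?thesis
    proof (cases "\<not> b \<and> AP_set B \<and> finite_to_one_on B f")
      case True
      then obtain A where "good \<A> A" "\<exists>C\<subseteq>B. AP_set C \<and> f ` C \<subseteq> A" using step_ap[OF assms, of B f] by blast
      thus ?thesis using True unfolding task_ok_def t by auto
    next
      case False
      obtain A where "good \<A> A" using step_mad[OF assms, of "UNIV"] by blast
      thus ?thesis using False c1 unfolding task_ok_def t by auto
    qed
  qed
qed

definition enc :: "bool \<times> nat set \<times> (nat \<Rightarrow> nat) \<Rightarrow> nat set" where
  "enc t = (case t of (b, B, f) \<Rightarrow>
     {prod_encode (0, if b then 1 else 0)} \<union> (\<lambda>x. prod_encode (1, x)) ` B \<union> range (\<lambda>n. prod_encode (n+2, f n)))"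

lemma enc_mem: "prod_encode (i, v) \<in> enc (b, B, f) \<longleftrightarrow>
   (i = 0 \<and> v = (if b then 1 else 0)) \<or> (i = 1 \<and> v \<in> B) \<or> (2 \<le> i \<and> v = f (i - 2))"
proof -
  have inj: "prod_encode p = prod_encode p' \<longleftrightarrow> p = p'" for p p'
    using inj_prod_encode[of UNIV] unfolding inj_on_def by blast
  have "prod_encode (i, v) \<in> enc (b, B, f) \<longleftrightarrow>
     (i = 0 \<and> v = (if b then 1 else 0)) \<or> (i = 1 \<and> v \<in> B) \<or> (\<exists>n. i = n+2 \<and> v = f n)"
    unfolding enc_def by (auto simp: inj)
  also have "(\<exists>n. i = n+2 \<and> v = f n) \<longleftrightarrow> (2 \<le> i \<and> v = f (i - 2))"
  proof
    assume "\<exists>n. i = n+2 \<and> v = f n" then obtain n where "i = n+2" "v = f n" by blast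
    thus "2 \<le> i \<and> v = f (i - 2)" by simp
  next
    assume h: "2 \<le> i \<and> v = f (i - 2)"
    hence "i = (i-2)+2 \<and> v = f (i-2)" by linarith
    thus "\<exists>n. i = n+2 \<and> v = f n" by blast
  qed
  finally show ?thesis .
qed

lemma inj_enc: "inj enc"
proof (rule injI)
  fix t t' assume e: "enc t = enc t'"
  obtain b B f where t: "t = (b, B, f)" by (cases t) auto
  obtain b' B' f' where t': "t' = (b', B', f')" by (cases t') auto
  have m: "prod_encode (i, v) \<in> enc (b, B, f) \<longleftrightarrow> prod_encode (i, v) \<in> enc (b', B', f')" for i v
    using e t t' by simp
  have "b = b'" using m[of 0 "if b then 1 else 0"] unfolding enc_mem by (auto split: if_splits)
  moreover have "B = B'" using m[of 1] unfolding enc_mem by auto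
  moreover have "f = f'"
  proof
    fix n show "f n = f' n" using m[of "n+2" "f n"] unfolding enc_mem by simp
  qed
  ultimately show "t = t'" using t t' by simp
qed


theorem lemma2p1:
  assumes "CH"
  shows "\<exists>\<A>. MAD \<A> \<and> (\<forall>A\<in>\<A>. \<not> IP_set A) \<and>
           (\<forall>B f. AP_set B \<and> finite_to_one_on B f \<longrightarrow>
              (\<exists>C A. C \<subseteq> B \<and> AP_set C \<and> A \<in> \<A> \<and> f ` C \<subseteq> A))"
proof -
  obtain R :: "((bool \<times> nat set \<times> (nat \<Rightarrow> nat)) \<times> (bool \<times> nat set \<times> (nat \<Rightarrow> nat))) set"
    where R: "wf R \<and> (\<forall>x y. x \<noteq> y \<longrightarrow> (x,y)\<in>R \<or> (y,x)\<in>R) \<and> (\<forall>y. countable {x. (x,y)\<in>R})"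
    using CH_wo[OF assms inj_enc] by (elim exE)
  have wf: "wf R" and tot: "\<forall>x y. x \<noteq> y \<longrightarrow> (x,y)\<in>R \<or> (y,x)\<in>R"
      and cnt: "\<forall>y. countable {x. (x,y)\<in>R}" using R by simp_all
  define H where "H \<phi> t = (SOME A. good (\<phi> ` {s. (s,t)\<in>R}) A \<and> task_ok t A)"
    for \<phi> :: "bool \<times> nat set \<times> (nat \<Rightarrow> nat) \<Rightarrow> nat set" and t
  define F where "F = wfrec R H"
  have Fdef: "F t = (SOME A. good (F ` {s. (s,t)\<in>R}) A \<and> task_ok t A)" for t
  proof -
    have "F t = H (cut F R t) t" unfolding F_def by (rule wfrec[OF wf])
    moreover have "(cut F R t) ` {s. (s,t)\<in>R} = F ` {s. (s,t)\<in>R}"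
      by (intro image_cong) (auto simp: cut_apply)
    ultimately show ?thesis unfolding H_def by simp
  qed
  have Fprop: "good (F ` {s. (s,t)\<in>R}) (F t) \<and> task_ok t (F t)" for t
  proof -
    have "countable {s. (s,t)\<in>R}" using cnt by blast
    hence "countable (F ` {s. (s,t)\<in>R})" by simp
    hence "\<exists>A. good (F ` {s. (s,t)\<in>R}) A \<and> task_ok t A" by (rule step_any)
    hence "good (F ` {s. (s,t)\<in>R}) (SOME A. good (F ` {s. (s,t)\<in>R}) A \<and> task_ok t A) \<and>
       task_ok t (SOME A. good (F ` {s. (s,t)\<in>R}) A \<and> task_ok t A)" by (rule someI_ex)
    thus ?thesis using Fdef[of t] by simp
  qed
  have claim: "infinite (F t) \<and> thin (F t) \<and> (\<forall>s. (s,t)\<in>R \<longrightarrow> F s = F t \<or> finite (F s \<inter> F t))" for t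
    using wf
  proof (induction t rule: wf_induct_rule)
    case (less t)
    have g: "good (F ` {s. (s,t)\<in>R}) (F t)" using Fprop by blast
    show ?case
    proof (cases "F t \<in> F ` {s. (s,t)\<in>R}")
      case True
      then obtain s0 where s0: "(s0,t)\<in>R" "F t = F s0" by blast
      have "\<forall>s. (s,t)\<in>R \<longrightarrow> F s = F t \<or> finite (F s \<inter> F t)"
      proof (intro allI impI)
        fix s assume st: "(s,t)\<in>R"
        show "F s = F t \<or> finite (F s \<inter> F t)"
        proof (cases "s = s0")
          case True thus ?thesis using s0 by simp
        next
          case False
          hence "(s,s0)\<in>R \<or> (s0,s)\<in>R" using tot by blast
          thus ?thesis
          proof
            assume "(s,s0)\<in>R"
            hence "F s = F s0 \<or> finite (F s \<inter> F s0)" using less.IH[OF s0(1)] by blast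
            thus ?thesis using s0(2) by simp
          next
            assume "(s0,s)\<in>R"
            hence "F s0 = F s \<or> finite (F s0 \<inter> F s)" using less.IH[OF st] by blast
            thus ?thesis using s0(2) by (auto simp: Int_commute)
          qed
        qed
      qed
      thus ?thesis using less.IH[OF s0(1)] s0(2) by simp
    next
      case False
      hence "infinite (F t) \<and> thin (F t) \<and> (\<forall>A'\<in>F ` {s. (s,t)\<in>R}. finite (A' \<inter> F t))"
        using g unfolding good_def by blast
      thus ?thesis by blast
    qed
  qed
  have MAD: "MAD (range F)" unfolding MAD_def almost_disjoint_def
  proof (intro conjI ballI allI impI)
    fix A assume "A \<in> range F" thus "infinite A" using claim by auto
  next
    fix A A' assume h: "A \<in> range F" "A' \<in> range F" "A \<noteq> A'"
    then obtain s t where st: "A = F s" "A' = F t" by blast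
    hence "s \<noteq> t" using h(3) by blast
    hence "(s,t)\<in>R \<or> (t,s)\<in>R" using tot by blast
    thus "finite (A \<inter> A')"
    proof
      assume "(s,t)\<in>R"
      hence "F s = F t \<or> finite (F s \<inter> F t)" using claim[of t] by blast
      thus ?thesis using st h(3) by simp
    next
      assume "(t,s)\<in>R"
      hence "F t = F s \<or> finite (F t \<inter> F s)" using claim[of s] by blast
      hence "finite (A' \<inter> A)" using st h(3) by simp
      thus ?thesis by (simp add: Int_commute)
    qed
  next
    fix D :: "nat set" assume D: "infinite D"
    have "task_ok (True, D, id) (F (True, D, id))" using Fprop by blast
    hence "infinite (D \<inter> F (True, D, id))" using D unfolding task_ok_def by simp
    thus "\<exists>A\<in>range F. infinite (D \<inter> A)" by blast
  qed
  have nIP: "\<forall>A\<in>range F. \<not> IP_set A" using claim thin_not_IP by blast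
  have AP: "\<forall>B f. AP_set B \<and> finite_to_one_on B f \<longrightarrow> (\<exists>C A. C \<subseteq> B \<and> AP_set C \<and> A \<in> range F \<and> f ` C \<subseteq> A)"
  proof (intro allI impI)
    fix B :: "nat set" and f :: "nat \<Rightarrow> nat" assume h: "AP_set B \<and> finite_to_one_on B f"
    have "task_ok (False, B, f) (F (False, B, f))" using Fprop by blast
    hence "\<exists>C\<subseteq>B. AP_set C \<and> f ` C \<subseteq> F (False, B, f)" using h unfolding task_ok_def by simp
    then obtain C where "C \<subseteq> B" "AP_set C" "f ` C \<subseteq> F (False, B, f)" by blast
    thus "\<exists>C A. C \<subseteq> B \<and> AP_set C \<and> A \<in> range F \<and> f ` C \<subseteq> A" by blast
  qed
  show ?thesis using MAD nIP AP by blast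
qed

end
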